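(* Let $T$ be a CPTP map with operator-sum representation $\{M_k\}$ and $\mathcal{H}_S$ a GAS subspace, and let $\mathcal{H}=\mathcal{H}_S\oplus\mathcal{H}_{T_1}\oplus\cdots\oplus\mathcal{H}_{T_N}$ be the decomposition produced by the DID construction started from $\mathcal{H}_S$. Then for $1\le n\le N$, $$\mathrm{supp}(T^{*n}(\Pi_S))=\mathcal{H}_S\oplus\bigoplus_{i=1}^n\mathcal{H}_{T_i},$$ and for $n>N$, $\mathrm{supp}(T^{*n}(\Pi_S))=\mathcal{H}$. In particular the DID subspaces do not depend on the chosen operator-sum representation.
   Context: $\mathcal{H}$ is a finite-dimensional complex Hilbert space; $T$ is CPTP: $T(\rho)=\sum_kM_k\rho M_k^\dagger$, $\sum_kM_k^\dagger M_k=I$, with dual $T^*(A)=\sum_kM_k^\dagger AM_k$. $\Pi_S$ is the orthogonal projection onto $\mathcal{H}_S$; $\mathrm{supp}(X)=(\ker X)^\perp$. $\mathcal{H}_S$ is invariant if $\rho\ge0$, $\mathrm{supp}(\rho)\subseteq\mathcal{H}_S$ implies $\mathrm{supp}(T(\rho))\subseteq\mathcal{H}_S$; an invariant $\mathcal{H}_S$ is GAS if $\lim_n\|T^n(\rho)-\Pi_ST^n(\rho)\Pi_S\|=0$ for every density operator $\rho$. DID construction: $\mathcal{H}_{S_1}=\mathcal{H}_S$, $\mathcal{H}_{R_1}=\mathcal{H}_S^\perp$; at step $i$, $M_{k,P'_i}=\Pi_{S_i}M_k|_{\mathcal{H}_{R_i}}:\mathcal{H}_{R_i}\to\mathcal{H}_{S_i}$,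 $\mathcal{H}_{R_{i+1}}=\bigcap_k\ker(M_{k,P'_i})$. (1) If $\mathcal{H}_{R_{i+1}}=\mathcal{H}_{R_i}$, set $\mathcal{H}_{T_i}=\mathcal{H}_{R_i}$ and stop (unsuccessful). (2) If $\mathcal{H}_{R_{i+1}}=\{0\}$, set $\mathcal{H}_{T_i}=\mathcal{H}_{R_i}$ and stop (successful). (3) Otherwise $\mathcal{H}_{T_i}$ is the orthogonal complement of $\mathcal{H}_{R_{i+1}}$ in $\mathcal{H}_{R_i}$, $\mathcal{H}_{S_{i+1}}=\mathcal{H}_{S_i}\oplus\mathcal{H}_{T_i}$, iterate. $N$ is the index of the final step. *)

theory Defs
  imports "HOL-Analysis.Analysis"
begin

text \<open>The Hilbert space is modelled as complex^'n (finite type 'n, dimension CARD('n));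
  operators are complex matrices complex^'n^'n acting by *v.\<close>

type_synonym 'n cvec = "complex^'n"
type_synonym 'n cmat = "complex^'n^'n"

definition cinner :: "'n::finite cvec \<Rightarrow> 'n cvec \<Rightarrow> complex" where
  "cinner x y = (\<Sum>i\<in>UNIV. cnj (x $ i) * y $ i)"

definition adj :: "'n::finite cmat \<Rightarrow> 'n cmat" where
  "adj A = (\<chi> i j. cnj (A $ j $ i))"

definition csubspace :: "'n::finite cvec set \<Rightarrow> bool" where
  "csubspace S \<longleftrightarrow> 0 \<in> S \<and> (\<forall>x\<in>S. \<forall>y\<in>S. x + y \<in> S) \<and> (\<forall>c. \<forall>x\<in>S. c *s x \<in> S)"

definition orth_compl :: "'n::finite cvec set \<Rightarrow> 'n cvec set" where
  "orth_compl S = {x. \<forall>y\<in>S. cinner y x = 0}"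

definition ker :: "'n::finite cmat \<Rightarrow> 'n cvec set" where
  "ker X = {x. X *v x = 0}"

definition supp :: "'n::finite cmat \<Rightarrow> 'n cvec set" where
  "supp X = orth_compl (ker X)"

text \<open>Sum of two subspaces (used for orthogonal direct sums).\<close>
definition ssum :: "'n::finite cvec set \<Rightarrow> 'n cvec set \<Rightarrow> 'n cvec set" (infixl \<open>\<oplus>\<^sub>s\<close> 65) where
  "A \<oplus>\<^sub>s B = {a + b | a b. a \<in> A \<and> b \<in> B}"

definition is_orth_proj :: "'n::finite cmat \<Rightarrow> 'n cvec set \<Rightarrow> bool" where
  "is_orth_proj P S \<longleftrightarrow> adj P = P \<and> P ** P = P \<and> range (\<lambda>x. P *v x) = S"

definition psd :: "'n::finite cmat \<Rightarrow> bool" where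
  "psd A \<longleftrightarrow> (\<forall>x. Im (cinner x (A *v x)) = 0 \<and> Re (cinner x (A *v x)) \<ge> 0)"

definition density :: "'n::finite cmat \<Rightarrow> bool" where
  "density \<rho> \<longleftrightarrow> psd \<rho> \<and> trace \<rho> = 1"

definition kraus_family :: "'n::finite cmat list \<Rightarrow> bool" where
  "kraus_family Ms \<longleftrightarrow> sum_list (map (\<lambda>M. adj M ** M) Ms) = mat 1"

definition kraus_map :: "'n::finite cmat list \<Rightarrow> 'n cmat \<Rightarrow> 'n cmat" where
  "kraus_map Ms \<rho> = sum_list (map (\<lambda>M. M ** \<rho> ** adj M) Ms)"

definition kraus_dual :: "'n::finite cmat list \<Rightarrow> 'n cmat \<Rightarrow> 'n cmat" where
  "kraus_dual Ms A = sum_list (map (\<lambda>M. adj M ** A ** M) Ms)"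

definition invariant :: "'n::finite cmat list \<Rightarrow> 'n cvec set \<Rightarrow> bool" where
  "invariant Ms S \<longleftrightarrow> (\<forall>\<rho>. psd \<rho> \<and> supp \<rho> \<subseteq> S \<longrightarrow> supp (kraus_map Ms \<rho>) \<subseteq> S)"

definition GAS :: "'n::finite cmat list \<Rightarrow> 'n cvec set \<Rightarrow> 'n cmat \<Rightarrow> bool" where
  "GAS Ms S P \<longleftrightarrow> invariant Ms S \<and>
     (\<forall>\<rho>. density \<rho> \<longrightarrow>
        (\<lambda>n. norm (((kraus_map Ms) ^^ n) \<rho> - P ** ((kraus_map Ms) ^^ n) \<rho> ** P)) \<longlonglongrightarrow> 0)"

text \<open>DID construction. did_SR Ms HS (i-1) = (S_i, R_i) for i \<ge> 1.
  R_{i+1} = \<Inter>_k ker(\<Pi>_{S_i} M_k |_{R_i}) = {x \<in> R_i. \<forall>k. M_k x \<perp> S_i}, and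
  S_{i+1} = S_i \<oplus> T_i with T_i the orthogonal complement of R_{i+1} in R_i.\<close>
definition next_R :: "'n::finite cmat list \<Rightarrow> 'n cvec set \<Rightarrow> 'n cvec set \<Rightarrow> 'n cvec set" where
  "next_R Ms S R = {x \<in> R. \<forall>M\<in>set Ms. M *v x \<in> orth_compl S}"

primrec did_SR :: "'n::finite cmat list \<Rightarrow> 'n cvec set \<Rightarrow> nat \<Rightarrow> 'n cvec set \<times> 'n cvec set" where
  "did_SR Ms HS 0 = (HS, orth_compl HS)"
| "did_SR Ms HS (Suc i) =
     (let S = fst (did_SR Ms HS i); R = snd (did_SR Ms HS i); R' = next_R Ms S R
      in (S \<oplus>\<^sub>s (R \<inter> orth_compl R'), R'))"

definition DID_S :: "'n::finite cmat list \<Rightarrow> 'n cvec set \<Rightarrow> nat \<Rightarrow> 'n cvec set" where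
  "DID_S Ms HS i = fst (did_SR Ms HS (i - 1))"

definition DID_R :: "'n::finite cmat list \<Rightarrow> 'n cvec set \<Rightarrow> nat \<Rightarrow> 'n cvec set" where
  "DID_R Ms HS i = snd (did_SR Ms HS (i - 1))"

definition DID_N :: "'n::finite cmat list \<Rightarrow> 'n cvec set \<Rightarrow> nat" where
  "DID_N Ms HS = (LEAST i. 1 \<le> i \<and>
      (DID_R Ms HS (Suc i) = DID_R Ms HS i \<or> DID_R Ms HS (Suc i) = {0}))"

definition DID_T :: "'n::finite cmat list \<Rightarrow> 'n cvec set \<Rightarrow> nat \<Rightarrow> 'n cvec set" where
  "DID_T Ms HS i = (if i = DID_N Ms HS then DID_R Ms HS i
                    else DID_R Ms HS i \<inter> orth_compl (DID_R Ms HS (Suc i)))"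

definition DID_sum :: "'n::finite cmat list \<Rightarrow> 'n cvec set \<Rightarrow> nat \<Rightarrow> 'n cvec set" where
  "DID_sum Ms HS n = {s + (\<Sum>i\<in>{1..n}. t i) | s t. s \<in> HS \<and> (\<forall>i\<in>{1..n}. t i \<in> DID_T Ms HS i)}"

end

theory Submission
  imports Defs
begin


lemma cinner_add_right: "cinner x (y + z) = cinner x y + cinner x z"
  by (simp add: cinner_def distrib_left sum.distrib)
lemma cinner_add_left: "cinner (x + y) z = cinner x z + cinner y z"
  by (simp add: cinner_def distrib_right sum.distrib)
lemma cinner_zero_right[simp]: "cinner x 0 = 0" by (simp add: cinner_def)
lemma cinner_zero_left[simp]: "cinner 0 x = 0" by (simp add: cinner_def)
lemma cinner_smult_right: "cinner x (c *s y) = c * cinner x y"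
  by (simp add: cinner_def sum_distrib_left mult_ac)
lemma cinner_smult_left: "cinner (c *s x) y = cnj c * cinner x y"
  by (simp add: cinner_def sum_distrib_left mult_ac)
lemma cinner_diff_right: "cinner x (y - z) = cinner x y - cinner x z"
  by (simp add: cinner_def right_diff_distrib sum_subtractf)
lemma cinner_commute: "cinner y x = cnj (cinner x y)"
  by (simp add: cinner_def mult.commute)
lemma cinner_zero_sym: "cinner x y = 0 \<longleftrightarrow> cinner y x = 0"
  using cinner_commute[of y x] by simp

lemma cinner_self: "cinner x x = complex_of_real (\<Sum>i\<in>UNIV. (cmod (x $ i))\<^sup>2)"
proof -
  have "\<And>z::complex. cnj z * z = complex_of_real ((cmod z)\<^sup>2)"
    by (metis complex_norm_square mult.commute of_real_power)
  then show ?thesis by (simp add: cinner_def)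
qed
lemma cinner_self_eq_0: "cinner x x = 0 \<longleftrightarrow> x = 0"
proof -
  have "cinner x x = 0 \<longleftrightarrow> (\<Sum>i\<in>UNIV. (cmod (x $ i))\<^sup>2) = 0"
    by (simp only: cinner_self of_real_eq_0_iff)
  also have "\<dots> \<longleftrightarrow> (\<forall>i. x $ i = 0)"
    by (simp add: sum_nonneg_eq_0_iff)
  finally show ?thesis by (simp add: vec_eq_iff)
qed
lemma cinner_self_Im: "Im (cinner x x) = 0" by (simp add: cinner_self)
lemma cinner_self_Re: "Re (cinner x x) \<ge> 0" by (simp add: cinner_self sum_nonneg)

lemma adj_cinner: "cinner x (adj A *v y) = cinner (A *v x) y"
  by (simp add: cinner_def adj_def matrix_vector_mult_def sum_distrib_left
      sum_distrib_right mult_ac) (rule sum.swap)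

lemma mv_smult: "(A::'n::finite cmat) *v (c *s x) = c *s (A *v x)"
  unfolding matrix_vector_mult_def vec_eq_iff
  by (auto simp: sum_distrib_left mult.left_commute intro!: sum.cong)

lemma mv_sum_list: "sum_list (map f xs) *v x = sum_list (map (\<lambda>M. f M *v x) xs)"
  by (induction xs) (simp_all add: matrix_vector_mult_add_rdistrib)

lemma cinner_sum_list_right: "cinner x (sum_list (map f xs)) = sum_list (map (\<lambda>M. cinner x (f M)) xs)"
  by (induction xs) (simp_all add: cinner_add_right)

lemma sum_list_nonneg_complex_0:
  assumes "\<And>M. M \<in> set xs \<Longrightarrow> Im (f M) = 0 \<and> Re (f M) \<ge> 0"
    and "sum_list (map f xs) = 0"
  shows "\<forall>M\<in>set xs. f M = 0"
proof -
  have "Re (sum_list (map f xs)) = sum_list (map (\<lambda>M. Re (f M)) xs)"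
    by (induction xs) simp_all
  with assms(2) have "sum_list (map (\<lambda>M. Re (f M)) xs) = 0" by simp
  then have "\<forall>y\<in>set (map (\<lambda>M. Re (f M)) xs). y = 0"
    using sum_list_nonneg_eq_0_iff[of "map (\<lambda>M. Re (f M)) xs"] assms(1) by auto
  then show ?thesis using assms(1) by (auto simp: complex_eq_iff)
qed

lemma sum_list_nonneg_complex:
  assumes "\<And>M. M \<in> set xs \<Longrightarrow> Im (f M) = 0 \<and> Re (f M) \<ge> 0"
  shows "Im (sum_list (map f xs)) = 0 \<and> Re (sum_list (map f xs)) \<ge> 0"
  using assms by (induction xs) auto



lemma csubspace_orth_compl: "csubspace (orth_compl S)"
  by (simp add: csubspace_def orth_compl_def cinner_add_right cinner_smult_right)

lemma csubspace_ker: "csubspace (ker A)"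
  by (simp add: csubspace_def ker_def matrix_vector_right_distrib mv_smult)

lemma scaleR_smult: "r *\<^sub>R (x::'n::finite cvec) = complex_of_real r *s x"
proof -
  have "\<forall>i. r *\<^sub>R (x$i) = complex_of_real r * x$i" by (simp add: scaleR_conv_of_real)
  then show ?thesis by (simp add: vec_eq_iff)
qed

lemma csubspace_subspace: "csubspace S \<Longrightarrow> subspace S"
  by (simp add: csubspace_def subspace_def scaleR_smult)

lemma csubspace_sum_list: "csubspace S \<Longrightarrow> (\<And>x. x \<in> set xs \<Longrightarrow> f x \<in> S) \<Longrightarrow> sum_list (map f xs) \<in> S"
  by (induction xs) (auto simp: csubspace_def)

lemma csubspace_diff: "csubspace S \<Longrightarrow> x \<in> S \<Longrightarrow> y \<in> S \<Longrightarrow> x - y \<in> S"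
  unfolding csubspace_def
  by (metis (no_types, lifting) diff_conv_add_uminus vector_smult_lid vector_smult_lneg)

lemma Re_cinner: "Re (cinner w z) = inner w z"
  by (simp add: cinner_def inner_vec_def inner_complex_def)

lemma cinner_ii: "cinner (\<i> *s w) z = - \<i> * cinner w z"
  by (simp add: cinner_smult_left)

lemma decomp:
  assumes "csubspace U"
  obtains p q where "p \<in> U" "q \<in> orth_compl U" "x = p + q"
proof -
  have sp: "span U = U" using csubspace_subspace[OF assms] by (simp add: span_eq_iff)
  obtain y z where y: "y \<in> span U" and z: "\<And>w. w \<in> span U \<Longrightarrow> orthogonal z w" and xe: "x = y + z"
    using orthogonal_subspace_decomp_exists by blast
  have "cinner w z = 0" if w: "w \<in> U" for w
  proof -
    have "\<i> *s w \<in> U" using w assms by (simp add: csubspace_def)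
    then have "Re (cinner (\<i> *s w) z) = 0" using z[of "\<i> *s w"] sp
      by (simp add: Re_cinner orthogonal_def inner_commute)
    moreover have "Re (cinner w z) = 0" using z[of w] sp w
      by (simp add: Re_cinner orthogonal_def inner_commute)
    ultimately show ?thesis by (simp add: cinner_ii complex_eq_iff)
  qed
  then have "z \<in> orth_compl U" by (simp add: orth_compl_def)
  then show ?thesis using that y sp xe by auto
qed

lemma orth_compl_antimono: "A \<subseteq> B \<Longrightarrow> orth_compl B \<subseteq> orth_compl A"
  by (auto simp: orth_compl_def)

lemma orth_compl_orth_compl:
  assumes "csubspace S"
  shows "orth_compl (orth_compl S) = S"
proof
  show "S \<subseteq> orth_compl (orth_compl S)"
    by (auto simp: orth_compl_def) (simp add: cinner_zero_sym)
  show "orth_compl (orth_compl S) \<subseteq> S"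
  proof
    fix x assume x: "x \<in> orth_compl (orth_compl S)"
    obtain p q where p: "p \<in> S" and q: "q \<in> orth_compl S" and xe: "x = p + q"
      using decomp[OF assms] by blast
    have "cinner q x = 0" using x q by (simp add: orth_compl_def)
    moreover have "cinner q p = 0" using q p
      by (simp add: orth_compl_def) (simp add: cinner_zero_sym)
    ultimately have "cinner q q = 0" using xe by (simp add: cinner_add_right)
    then have "q = 0" by (simp add: cinner_self_eq_0)
    then show "x \<in> S" using xe p by simp
  qed
qed

lemma orth_compl_zero: "orth_compl {0} = UNIV"
  by (simp add: orth_compl_def)

lemma orth_compl_UNIV: "orth_compl UNIV = {0}"
  by (auto simp: orth_compl_def) (metis cinner_self_eq_0)

lemma orth_compl_ssum:
  assumes "0 \<in> A" "0 \<in> B"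
  shows "orth_compl (A \<oplus>\<^sub>s B) = orth_compl A \<inter> orth_compl B"
proof
  show "orth_compl (A \<oplus>\<^sub>s B) \<subseteq> orth_compl A \<inter> orth_compl B"
  proof -
    have "A \<subseteq> A \<oplus>\<^sub>s B" "B \<subseteq> A \<oplus>\<^sub>s B" using assms by (force simp: ssum_def)+
    then show ?thesis using orth_compl_antimono by blast
  qed
  show "orth_compl A \<inter> orth_compl B \<subseteq> orth_compl (A \<oplus>\<^sub>s B)"
    by (auto simp: orth_compl_def ssum_def cinner_add_left)
qed

lemma compl_step:
  assumes W: "csubspace W" and U: "csubspace U" and WU: "W \<subseteq> U"
  shows "U \<inter> orth_compl (U \<inter> orth_compl W) = W"
proof
  show "W \<subseteq> U \<inter> orth_compl (U \<inter> orth_compl W)"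
    using WU by (auto simp: orth_compl_def) (simp add: cinner_zero_sym)
  show "U \<inter> orth_compl (U \<inter> orth_compl W) \<subseteq> W"
  proof
    fix x assume x: "x \<in> U \<inter> orth_compl (U \<inter> orth_compl W)"
    obtain p q where p: "p \<in> W" and q: "q \<in> orth_compl W" and xe: "x = p + q"
      using decomp[OF W] by blast
    have "q = x - p" using xe by simp
    then have "q \<in> U" using x p WU csubspace_diff[OF U] by blast
    then have "cinner q x = 0" using x q by (simp add: orth_compl_def)
    moreover have "cinner q p = 0" using q p
      by (simp add: orth_compl_def) (simp add: cinner_zero_sym)
    ultimately have "cinner q q = 0" using xe by (simp add: cinner_add_right)
    then have "q = 0" by (simp add: cinner_self_eq_0)
    then show "x \<in> W" using xe p by simp
  qed
qed

lemma decomp2: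
  assumes W: "csubspace W" and U: "csubspace U" and WU: "W \<subseteq> U"
  shows "orth_compl W = orth_compl U \<oplus>\<^sub>s (U \<inter> orth_compl W)"
proof
  show "orth_compl U \<oplus>\<^sub>s (U \<inter> orth_compl W) \<subseteq> orth_compl W"
    using orth_compl_antimono[OF WU] csubspace_orth_compl[of W]
    by (auto simp: ssum_def csubspace_def)
  show "orth_compl W \<subseteq> orth_compl U \<oplus>\<^sub>s (U \<inter> orth_compl W)"
  proof
    fix x assume x: "x \<in> orth_compl W"
    obtain p q where p: "p \<in> U" and q: "q \<in> orth_compl U" and xe: "x = p + q"
      using decomp[OF U] by blast
    have qW: "q \<in> orth_compl W" using q orth_compl_antimono[OF WU] by blast
    have "p = x - q" using xe by simp
    then have "p \<in> orth_compl W" using csubspace_diff[OF csubspace_orth_compl[of W] x qW]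
      by simp
    moreover have "x = q + p" using xe by (simp add: add.commute)
    ultimately show "x \<in> orth_compl U \<oplus>\<^sub>s (U \<inter> orth_compl W)"
      using p q unfolding ssum_def by blast
  qed
qed



definition nonneg :: "'n::finite cmat \<Rightarrow> bool" where
  "nonneg A \<longleftrightarrow> (\<forall>x. Im (cinner x (A *v x)) = 0 \<and> Re (cinner x (A *v x)) \<ge> 0 \<and>
      (cinner x (A *v x) = 0 \<longrightarrow> A *v x = 0))"

lemma dual_mv: "kraus_dual Ms A *v x = sum_list (map (\<lambda>M. adj M *v (A *v (M *v x))) Ms)"
  by (simp add: kraus_dual_def mv_sum_list matrix_vector_mul_assoc matrix_mul_assoc)

lemma dual_quad: "cinner x (kraus_dual Ms A *v x) = sum_list (map (\<lambda>M. cinner (M *v x) (A *v (M *v x))) Ms)"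
  by (simp add: dual_mv cinner_sum_list_right adj_cinner)

lemma nonneg_dual:
  assumes "nonneg A"
  shows "nonneg (kraus_dual Ms A)" and "ker (kraus_dual Ms A) = {x. \<forall>M\<in>set Ms. M *v x \<in> ker A}"
proof -
  have pos: "\<And>x M. Im (cinner (M *v x) (A *v (M *v x))) = 0 \<and> Re (cinner (M *v x) (A *v (M *v x))) \<ge> 0"
    using assms by (simp add: nonneg_def)
  have z: "\<forall>M\<in>set Ms. M *v x \<in> ker A" if "cinner x (kraus_dual Ms A *v x) = 0" for x
  proof -
    have "\<forall>M\<in>set Ms. cinner (M *v x) (A *v (M *v x)) = 0"
      using sum_list_nonneg_complex_0[OF pos] that by (simp add: dual_quad)
    then show ?thesis using assms by (simp add: nonneg_def ker_def)
  qed
  have bk: "kraus_dual Ms A *v x = 0" if "\<forall>M\<in>set Ms. M *v x \<in> ker A" for x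
  proof -
    have "sum_list (map (\<lambda>M. adj M *v (A *v (M *v x))) Ms) = sum_list (map (\<lambda>M. 0) Ms)"
      using that by (intro arg_cong[where f=sum_list] map_cong) (auto simp: ker_def)
    then show ?thesis by (simp add: dual_mv)
  qed
  have "Im (cinner x (kraus_dual Ms A *v x)) = 0 \<and> Re (cinner x (kraus_dual Ms A *v x)) \<ge> 0" for x
    unfolding dual_quad
    using sum_list_nonneg_complex[of Ms "\<lambda>M. cinner (M *v x) (A *v (M *v x))"] pos by blast
  then show "nonneg (kraus_dual Ms A)"
    unfolding nonneg_def using z bk by blast
  show "ker (kraus_dual Ms A) = {x. \<forall>M\<in>set Ms. M *v x \<in> ker A}"
    using z bk by (auto simp: ker_def)
qed

lemma proj_facts:
  assumes "is_orth_proj PS HS"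
  shows "nonneg PS" and "ker PS = orth_compl HS"
proof -
  have a: "adj PS = PS" and b: "PS ** PS = PS" and r: "range (\<lambda>x. PS *v x) = HS"
    using assms by (auto simp: is_orth_proj_def)
  have q: "cinner x (PS *v x) = cinner (PS *v x) (PS *v x)" for x
  proof -
    have "PS *v x = adj PS *v (PS *v x)" using a b by (simp add: matrix_vector_mul_assoc)
    then have "cinner x (PS *v x) = cinner x (adj PS *v (PS *v x))" by simp
    also have "\<dots> = cinner (PS *v x) (PS *v x)" by (simp add: adj_cinner)
    finally show ?thesis .
  qed
  show "nonneg PS" unfolding nonneg_def q by (simp add: cinner_self_Im cinner_self_Re cinner_self_eq_0)
  show "ker PS = orth_compl HS"
  proof
    show "ker PS \<subseteq> orth_compl HS"
    proof
      fix x assume x: "x \<in> ker PS"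
      have "cinner y x = 0" if yH: "y \<in> HS" for y
      proof -
        obtain w where "y = PS *v w" using r yH by auto
        then have "cinner y x = cinner w (adj PS *v x)" by (simp add: adj_cinner)
        then show ?thesis using a x by (simp add: ker_def)
      qed
      then show "x \<in> orth_compl HS" by (simp add: orth_compl_def)
    qed
    show "orth_compl HS \<subseteq> ker PS"
    proof
      fix x assume x: "x \<in> orth_compl HS"
      have "PS *v x \<in> HS" using r by auto
      then have "cinner (PS *v x) x = 0" using x by (simp add: orth_compl_def)
      then have "cinner x (PS *v x) = 0" using cinner_zero_sym by blast
      then show "x \<in> ker PS" by (simp add: q cinner_self_eq_0 ker_def)
    qed
  qed
qed

definition KK :: "'n::finite cmat list \<Rightarrow> 'n cmat \<Rightarrow> nat \<Rightarrow> 'n cvec set" where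
  "KK Ms PS j = ker ((kraus_dual Ms ^^ j) PS)"

lemma KK_facts:
  assumes "is_orth_proj PS HS"
  shows "nonneg ((kraus_dual Ms ^^ j) PS)"
    and "KK Ms PS 0 = orth_compl HS"
    and "KK Ms PS (Suc j) = {x. \<forall>M\<in>set Ms. M *v x \<in> KK Ms PS j}"
proof -
  show nn: "nonneg ((kraus_dual Ms ^^ j) PS)" for j
    by (induction j) (simp_all add: proj_facts[OF assms] nonneg_dual)
  show "KK Ms PS 0 = orth_compl HS" by (simp add: KK_def proj_facts[OF assms])
  show "KK Ms PS (Suc j) = {x. \<forall>M\<in>set Ms. M *v x \<in> KK Ms PS j}"
    by (simp add: KK_def nonneg_dual[OF nn])
qed

lemma csubspace_KK: "csubspace (KK Ms PS j)"
  by (simp add: KK_def csubspace_ker)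

definition proj :: "'n::finite cvec \<Rightarrow> 'n cmat" where
  "proj v = (\<chi> i j. v $ i * cnj (v $ j))"

lemma proj_mv: "proj v *v y = cinner v y *s v"
  unfolding proj_def matrix_vector_mult_def cinner_def vec_eq_iff
  by (auto simp: sum_distrib_right intro!: sum.cong)

lemma kraus_map_proj: "kraus_map Ms (proj x) = sum_list (map (\<lambda>M. proj (M *v x)) Ms)"
proof -
  have "M ** proj x ** adj M = proj (M *v x)" for M
    unfolding matrix_eq
    by (simp add: matrix_vector_mul_assoc[symmetric] proj_mv mv_smult adj_cinner)
  then show ?thesis by (simp add: kraus_map_def)
qed

lemma ker_projs: "ker (sum_list (map (\<lambda>M. proj (f M)) xs)) \<subseteq> {y. \<forall>M\<in>set xs. cinner (f M) y = 0}"
proof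
  fix y assume y: "y \<in> ker (sum_list (map (\<lambda>M. proj (f M)) xs))"
  have "cinner y (sum_list (map (\<lambda>M. proj (f M)) xs) *v y) = sum_list (map (\<lambda>M. cinner (f M) y * cnj (cinner (f M) y)) xs)"
    by (simp add: mv_sum_list cinner_sum_list_right proj_mv cinner_smult_right)
       (intro arg_cong[where f=sum_list] map_cong refl arg_cong[where f="(*) _"] cinner_commute)
  then have "sum_list (map (\<lambda>M. cinner (f M) y * cnj (cinner (f M) y)) xs) = 0"
    using y by (simp add: ker_def)
  moreover have "\<And>M. Im (cinner (f M) y * cnj (cinner (f M) y)) = 0 \<and> Re (cinner (f M) y * cnj (cinner (f M) y)) \<ge> 0"
    by (simp add: complex_mult_cnj)
  ultimately have "\<forall>M\<in>set xs. cinner (f M) y * cnj (cinner (f M) y) = 0"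
    using sum_list_nonneg_complex_0[of xs "\<lambda>M. cinner (f M) y * cnj (cinner (f M) y)"] by blast
  then show "y \<in> {y. \<forall>M\<in>set xs. cinner (f M) y = 0}" by simp
qed

lemma in_supp_projs: "M \<in> set xs \<Longrightarrow> f M \<in> supp (sum_list (map (\<lambda>M. proj (f M)) xs))"
  using ker_projs[of f xs] unfolding supp_def orth_compl_def
  by (auto simp: cinner_zero_sym)

lemma supp_projs_sub:
  assumes "csubspace K" "\<And>M. M \<in> set xs \<Longrightarrow> f M \<in> K"
  shows "supp (sum_list (map (\<lambda>M. proj (f M)) xs)) \<subseteq> K"
proof -
  have "orth_compl K \<subseteq> ker (sum_list (map (\<lambda>M. proj (f M)) xs))"
  proof
    fix y assume y: "y \<in> orth_compl K"
    have "sum_list (map (\<lambda>M. proj (f M) *v y) xs) = sum_list (map (\<lambda>M. 0) xs)"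
      using y assms(2) by (intro arg_cong[where f=sum_list] map_cong) (auto simp: proj_mv orth_compl_def)
    then show "y \<in> ker (sum_list (map (\<lambda>M. proj (f M)) xs))" by (simp add: ker_def mv_sum_list)
  qed
  then have "supp (sum_list (map (\<lambda>M. proj (f M)) xs)) \<subseteq> orth_compl (orth_compl K)"
    unfolding supp_def by (rule orth_compl_antimono)
  then show ?thesis using orth_compl_orth_compl[OF assms(1)] by simp
qed

lemma psd_proj: "psd (proj x)"
proof -
  have "cinner y (proj x *v y) = cinner x y * cnj (cinner x y)" for y
    using cinner_commute[of y x] by (simp add: proj_mv cinner_smult_right)
  then show ?thesis by (simp add: psd_def complex_mult_cnj)
qed



lemma inv_M:
  assumes "invariant Ms HS" "csubspace HS" "s \<in> HS" "M \<in> set Ms"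
  shows "M *v s \<in> HS"
proof -
  have "supp (sum_list (map (\<lambda>v. proj v) [s])) \<subseteq> HS"
    using supp_projs_sub[OF assms(2), of "[s]" "\<lambda>v. v"] assms(3) by simp
  then have "supp (proj s) \<subseteq> HS" by simp
  then have "supp (kraus_map Ms (proj s)) \<subseteq> HS"
    using assms(1) psd_proj by (auto simp: invariant_def)
  moreover have "M *v s \<in> supp (kraus_map Ms (proj s))"
    unfolding kraus_map_proj using in_supp_projs[OF assms(4), of "\<lambda>M. M *v s"] .
  ultimately show ?thesis by blast
qed

lemma mat_mult_zero_l: "(0::'n::finite cmat) ** A = 0"
  by (simp add: matrix_matrix_mult_def vec_eq_iff)

lemma KK_mono:
  assumes kf: "kraus_family Ms" and inv: "invariant Ms HS" and cs: "csubspace HS"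
    and pr: "is_orth_proj PS HS"
  shows "KK Ms PS (Suc j) \<subseteq> KK Ms PS j"
proof (induction j)
  case 0
  show ?case
  proof
    fix x assume "x \<in> KK Ms PS (Suc 0)"
    then have x: "\<forall>M\<in>set Ms. M *v x \<in> orth_compl HS" using KK_facts[OF pr] by simp
    have "cinner s x = 0" if s: "s \<in> HS" for s
    proof -
      have "cinner s x = cinner s (mat 1 *v x)" by simp
      also have "\<dots> = cinner s (sum_list (map (\<lambda>M. adj M ** M) Ms) *v x)"
        using kf by (simp add: kraus_family_def)
      also have "\<dots> = sum_list (map (\<lambda>M. cinner s ((adj M ** M) *v x)) Ms)"
        by (simp add: mv_sum_list cinner_sum_list_right)
      also have "\<dots> = sum_list (map (\<lambda>M. cinner s (adj M *v (M *v x))) Ms)"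
        by (simp add: matrix_vector_mul_assoc)
      also have "\<dots> = sum_list (map (\<lambda>M. 0) Ms)"
        using x inv_M[OF inv cs s] by (intro arg_cong[where f=sum_list] map_cong)
           (auto simp: adj_cinner orth_compl_def)
      finally show ?thesis by simp
    qed
    then show "x \<in> KK Ms PS 0" using KK_facts[OF pr] by (simp add: orth_compl_def)
  qed
next
  case (Suc j)
  then show ?case using KK_facts(3)[OF pr] by auto
qed

lemma KK_antimono:
  assumes kf: "kraus_family Ms" and inv: "invariant Ms HS" and cs: "csubspace HS"
    and pr: "is_orth_proj PS HS"
    and ij: "i \<le> j"
  shows "KK Ms PS j \<subseteq> KK Ms PS i"
  using ij
proof (induction j rule: dec_induct)
  case base
  then show ?case by simp
next
  case (step n)
  then show ?case using KK_mono[OF assms(1-4), of n] by blast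
qed

lemma KK_Suc_map:
  assumes pr: "is_orth_proj PS HS"
  shows "KK Ms PS (Suc j) = {x. supp (kraus_map Ms (proj x)) \<subseteq> KK Ms PS j}"
proof -
  have "(\<forall>M\<in>set Ms. M *v x \<in> KK Ms PS j) \<longleftrightarrow> supp (kraus_map Ms (proj x)) \<subseteq> KK Ms PS j" for x
    unfolding kraus_map_proj
    using supp_projs_sub[OF csubspace_KK, of Ms "\<lambda>M. M *v x"] in_supp_projs[of _ Ms "\<lambda>M. M *v x"]
    by blast
  then show ?thesis using KK_facts(3)[OF pr] by auto
qed

lemma KK_indep:
  assumes pr: "is_orth_proj PS HS" and eq: "kraus_map Ms' = kraus_map Ms"
  shows "KK Ms' PS j = KK Ms PS j"
  by (induction j) (simp_all add: KK_facts(2)[OF pr] KK_Suc_map[OF pr] eq)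

lemma did_KK:
  assumes kf: "kraus_family Ms" and inv: "invariant Ms HS" and cs: "csubspace HS"
    and pr: "is_orth_proj PS HS"
  shows "snd (did_SR Ms HS j) = KK Ms PS j \<and> orth_compl (fst (did_SR Ms HS j)) = KK Ms PS j
         \<and> 0 \<in> fst (did_SR Ms HS j)"
proof (induction j)
  case 0
  have "0 \<in> HS" using cs by (simp add: csubspace_def)
  then show ?case using KK_facts(2)[OF pr] by simp
next
  case (Suc j)
  define S where "S = fst (did_SR Ms HS j)"
  define R where "R = snd (did_SR Ms HS j)"
  have R: "R = KK Ms PS j" and S: "orth_compl S = KK Ms PS j" and S0: "0 \<in> S"
    using Suc by (auto simp: S_def R_def)
  have R': "next_R Ms S R = KK Ms PS (Suc j)"
  proof -
    have "next_R Ms S R = {x \<in> KK Ms PS j. \<forall>M\<in>set Ms. M *v x \<in> KK Ms PS j}"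
      unfolding next_R_def R S ..
    also have "\<dots> = KK Ms PS j \<inter> KK Ms PS (Suc j)"
      unfolding KK_facts(3)[OF pr, of Ms j] by blast
    also have "\<dots> = KK Ms PS (Suc j)" using KK_mono[OF assms, of j] by blast
    finally show ?thesis .
  qed
  have "orth_compl (S \<oplus>\<^sub>s (R \<inter> orth_compl (next_R Ms S R))) = KK Ms PS (Suc j)"
  proof -
    have z: "0 \<in> R \<inter> orth_compl (next_R Ms S R)"
      using csubspace_KK[of Ms PS j] csubspace_orth_compl[of "next_R Ms S R"] R
      by (simp add: csubspace_def)
    have "orth_compl (S \<oplus>\<^sub>s (R \<inter> orth_compl (next_R Ms S R)))
        = orth_compl S \<inter> orth_compl (R \<inter> orth_compl (next_R Ms S R))"
      by (rule orth_compl_ssum[OF S0 z])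
    also have "\<dots> = KK Ms PS j \<inter> orth_compl (KK Ms PS j \<inter> orth_compl (KK Ms PS (Suc j)))"
      using S R R' by simp
    also have "\<dots> = KK Ms PS (Suc j)"
      using compl_step[OF csubspace_KK csubspace_KK KK_mono[OF assms]] .
    finally show ?thesis .
  qed
  moreover have "0 \<in> S \<oplus>\<^sub>s (R \<inter> orth_compl (next_R Ms S R))"
  proof -
    have "0 \<in> R \<inter> orth_compl (next_R Ms S R)"
      using csubspace_KK[of Ms PS j] csubspace_orth_compl[of "next_R Ms S R"] R
      by (simp add: csubspace_def)
    then have "(0::'a cvec) + 0 \<in> S \<oplus>\<^sub>s (R \<inter> orth_compl (next_R Ms S R))"
      using S0 unfolding ssum_def by blast
    then show ?thesis by simp
  qed
  moreover have "did_SR Ms HS (Suc j) = (S \<oplus>\<^sub>s (R \<inter> orth_compl (next_R Ms S R)), next_R Ms S R)"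
    by (simp add: S_def R_def Let_def)
  ultimately show ?case using R' by simp
qed

lemma DID_R_KK:
  assumes kf: "kraus_family Ms" and inv: "invariant Ms HS" and cs: "csubspace HS"
    and pr: "is_orth_proj PS HS"
  shows "DID_R Ms HS i = KK Ms PS (i - 1)"
  using did_KK[OF assms] by (simp add: DID_R_def)



lemma mat_add_rdistrib: "((A::complex^'n::finite^'m::finite) + B) ** C = A ** C + B ** C"
  by (simp add: matrix_matrix_mult_def vec_eq_iff sum.distrib distrib_right)

lemma sum_list_mult_r: "sum_list (map (\<lambda>M. (f M :: 'n::finite cmat) ** (C::'n::finite cmat)) xs) = sum_list (map f xs) ** C"
  by (induction xs) (simp_all add: mat_add_rdistrib mat_mult_zero_l)

lemma trace_sum_list: "trace (sum_list (map f xs) :: 'n::finite cmat) = sum_list (map (\<lambda>M. trace (f M)) xs)"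
  by (induction xs) (simp_all add: trace_add trace_0[simplified])

lemma trace_kraus:
  assumes kf: "kraus_family Ms"
  shows "trace (kraus_map Ms \<sigma>) = trace \<sigma>"
proof -
  have "trace (kraus_map Ms \<sigma>) = sum_list (map (\<lambda>M. trace (M ** \<sigma> ** adj M)) Ms)"
    by (simp add: kraus_map_def trace_sum_list)
  also have "\<dots> = sum_list (map (\<lambda>M. trace ((adj M ** M) ** \<sigma>)) Ms)"
    by (simp add: trace_mul_sym[of _ "adj _"] matrix_mul_assoc)
  also have "\<dots> = trace (sum_list (map (\<lambda>M. adj M ** M) Ms) ** \<sigma>)"
    by (simp add: trace_sum_list[symmetric] sum_list_mult_r)
  also have "\<dots> = trace \<sigma>" using kf by (simp add: kraus_family_def)
  finally show ?thesis .
qed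

lemma trace_proj: "trace (proj u) = cinner u u"
proof -
  have "\<And>i. proj u $ i $ i = cnj (u$i) * u$i" by (simp add: proj_def mult.commute)
  then show ?thesis by (simp add: trace_def cinner_def)
qed

lemma no_stall:
  fixes Ms :: "'n::finite cmat list"
  assumes kf: "kraus_family Ms" and gas: "GAS Ms HS PS" and cs: "csubspace HS"
    and pr: "is_orth_proj PS HS" and eq: "KK Ms PS (Suc j) = KK Ms PS j"
  shows "KK Ms PS j = {0}"
proof (rule ccontr)
  assume ne: "KK Ms PS j \<noteq> {0}"
  define K where "K = KK Ms PS j"
  have csK: "csubspace K" by (simp add: K_def csubspace_KK)
  have "0 \<in> K" using csK by (simp add: csubspace_def)
  with ne obtain v where vK: "v \<in> K" and v0: "v \<noteq> 0" unfolding K_def by blast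
  have inv: "invariant Ms HS" using gas by (simp add: GAS_def)
  define a where "a = Re (cinner v v)"
  have va: "cinner v v = complex_of_real a"
    using cinner_self_Im[of v] unfolding a_def by (simp add: complex_eq_iff)
  have a0: "a \<ge> 0" using cinner_self_Re[of v] by (simp add: a_def)
  have an0: "a \<noteq> 0"
  proof
    assume "a = 0"
    then have "cinner v v = 0" using va by simp
    then show False using v0 cinner_self_eq_0[of v] by simp
  qed
  have apos: "a > 0" using a0 an0 by linarith
  define c where "c = complex_of_real (1 / sqrt a)"
  define u where "u = c *s v"
  have uK: "u \<in> K" using csK vK unfolding u_def csubspace_def by blast
  have real1: "1 / sqrt a * (1 / sqrt a * a) = 1"
  proof -
    have "sqrt a * sqrt a = a" using a0 by simp
    then show ?thesis using apos by (simp add: field_simps)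
  qed
  have uu: "cinner u u = 1"
  proof -
    have "cinner u u = cnj c * (c * complex_of_real a)"
      by (simp add: u_def cinner_smult_left cinner_smult_right va)
    also have "\<dots> = complex_of_real (1 / sqrt a * (1 / sqrt a * a))"
      unfolding c_def by (simp only: complex_cnj_complex_of_real of_real_mult)
    also have "\<dots> = 1" using real1 by simp
    finally show ?thesis .
  qed
  define \<rho> where "\<rho> = proj u"
  have dens: "density \<rho>"
    by (simp add: density_def \<rho>_def psd_proj trace_proj uu)
  define RI where "RI \<sigma> \<longleftrightarrow> (\<forall>y. (\<sigma>::'n cmat) *v y \<in> K)" for \<sigma>
  have MK: "M *v x \<in> K" if "x \<in> K" "M \<in> set Ms" for x M
    using that eq KK_facts(3)[OF pr, of Ms j] unfolding K_def by auto
  have RI_step: "RI (kraus_map Ms \<sigma>)" if "RI \<sigma>" for \<sigma>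
  proof -
    have mv: "kraus_map Ms \<sigma> *v y = sum_list (map (\<lambda>M. M *v (\<sigma> *v (adj M *v y))) Ms)" for y
      by (simp add: kraus_map_def mv_sum_list matrix_vector_mul_assoc matrix_mul_assoc)
    have "\<forall>y. \<sigma> *v y \<in> K" using that by (simp add: RI_def)
    then have "sum_list (map (\<lambda>M. M *v (\<sigma> *v (adj M *v y))) Ms) \<in> K" for y
      using csubspace_sum_list[OF csK, of Ms "\<lambda>M. M *v (\<sigma> *v (adj M *v y))"] MK by blast
    then show ?thesis using mv by (simp add: RI_def)
  qed
  have rn: "RI ((kraus_map Ms ^^ n) \<rho>) \<and> trace ((kraus_map Ms ^^ n) \<rho>) = 1" for n
  proof (induction n)
    case 0
    have "RI \<rho>" unfolding RI_def \<rho>_def proj_mv using uK csK by (simp add: csubspace_def)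
    then show ?case using dens by (simp add: density_def)
  next
    case (Suc n)
    then show ?case using RI_step trace_kraus[OF kf] by simp
  qed
  have K0: "K \<subseteq> ker PS"
    using KK_antimono[OF kf inv cs pr, of 0 j] by (simp add: K_def KK_def)
  have zero: "PS ** (kraus_map Ms ^^ n) \<rho> = 0" for n
    unfolding matrix_eq
    using rn[of n] K0 by (auto simp: RI_def ker_def matrix_vector_mul_assoc[symmetric])
  have lim: "(\<lambda>n. norm ((kraus_map Ms ^^ n) \<rho>)) \<longlonglongrightarrow> 0"
  proof -
    have l: "(\<lambda>n. norm ((kraus_map Ms ^^ n) \<rho> - PS ** (kraus_map Ms ^^ n) \<rho> ** PS)) \<longlonglongrightarrow> 0"
      using gas dens unfolding GAS_def by blast
    have "(kraus_map Ms ^^ n) \<rho> - PS ** (kraus_map Ms ^^ n) \<rho> ** PS = (kraus_map Ms ^^ n) \<rho>" for n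
      by (simp add: zero mat_mult_zero_l)
    then show ?thesis using l by simp
  qed
  have bound: "1 \<le> real CARD('n) * norm ((kraus_map Ms ^^ n) \<rho>)" for n
  proof -
    define A where "A = (kraus_map Ms ^^ n) \<rho>"
    have "1 = norm (trace A)" using rn[of n] by (simp add: A_def)
    also have "\<dots> \<le> (\<Sum>i\<in>UNIV. norm (A $ i $ i))" unfolding trace_def by (rule norm_sum)
    also have "\<dots> \<le> (\<Sum>i\<in>(UNIV::'n set). norm A)"
      by (intro sum_mono order_trans[OF Finite_Cartesian_Product.norm_nth_le Finite_Cartesian_Product.norm_nth_le])
    also have "\<dots> = real CARD('n) * norm A" by simp
    finally show ?thesis by (simp add: A_def)
  qed
  have cpos: "(0::real) < 1 / real CARD('n)" by simp
  obtain n0 where "\<forall>n\<ge>n0. norm (norm ((kraus_map Ms ^^ n) \<rho>) - 0) < 1 / real CARD('n)"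
    using LIMSEQ_D[OF lim cpos] by blast
  then have "norm ((kraus_map Ms ^^ n0) \<rho>) < 1 / real CARD('n)" by simp
  then have "real CARD('n) * norm ((kraus_map Ms ^^ n0) \<rho>) < 1"
    by (simp add: field_simps)
  with bound[of n0] show False by simp
qed

lemma stab:
  assumes kf: "kraus_family Ms" and inv: "invariant Ms HS" and cs: "csubspace HS"
    and pr: "is_orth_proj PS HS"
  shows "\<exists>j. KK Ms PS (Suc j) = KK Ms PS j"
proof (rule ccontr)
  assume "\<not> ?thesis"
  then have ps: "KK Ms PS (Suc j) \<subset> KK Ms PS j" for j using KK_mono[OF assms, of j] by blast
  have sp: "span (KK Ms PS j) = KK Ms PS j" for j
    using csubspace_subspace[OF csubspace_KK] by (simp add: span_eq_iff)
  have lt: "dim (KK Ms PS (Suc j)) < dim (KK Ms PS j)" for j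
    using dim_psubset[of "KK Ms PS (Suc j)" "KK Ms PS j"] ps[of j] sp by simp
  have "dim (KK Ms PS j) + j \<le> dim (KK Ms PS 0)" for j
  proof (induction j)
    case 0 then show ?case by simp
  next
    case (Suc j) then show ?case using lt[of j] by simp
  qed
  from this[of "Suc (dim (KK Ms PS 0))"] show False by simp
qed

lemma N_props:
  assumes kf: "kraus_family Ms" and gas: "GAS Ms HS PS" and cs: "csubspace HS"
    and pr: "is_orth_proj PS HS"
  shows "1 \<le> DID_N Ms HS" "KK Ms PS (DID_N Ms HS) = {0}"
    "\<And>i. 1 \<le> i \<Longrightarrow> i < DID_N Ms HS \<Longrightarrow> KK Ms PS i \<noteq> {0}"
proof -
  have inv: "invariant Ms HS" using gas by (simp add: GAS_def)
  note R = DID_R_KK[OF kf inv cs pr]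
  have z: "KK Ms PS i = {0}" if "KK Ms PS (Suc i) \<subseteq> KK Ms PS i" "KK Ms PS i \<subseteq> {0}" for i
    using that csubspace_KK[of Ms PS i] by (auto simp: csubspace_def)
  have eqv: "(1 \<le> i \<and> (DID_R Ms HS (Suc i) = DID_R Ms HS i \<or> DID_R Ms HS (Suc i) = {0}))
      \<longleftrightarrow> (1 \<le> i \<and> KK Ms PS i = {0})" for i
  proof (cases i)
    case 0 then show ?thesis by simp
  next
    case (Suc k)
    have "KK Ms PS (Suc k) = KK Ms PS k \<Longrightarrow> KK Ms PS (Suc k) = {0}"
      using no_stall[OF kf gas cs pr, of k] by simp
    then show ?thesis using Suc R by auto
  qed
  have N: "DID_N Ms HS = (LEAST i. 1 \<le> i \<and> KK Ms PS i = {0})"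
    unfolding DID_N_def eqv ..
  obtain j where "KK Ms PS (Suc j) = KK Ms PS j" using stab[OF kf inv cs pr] by blast
  then have "KK Ms PS j = {0}" using no_stall[OF kf gas cs pr] by blast
  then have ex: "1 \<le> Suc j \<and> KK Ms PS (Suc j) = {0}"
    using KK_mono[OF kf inv cs pr, of j] csubspace_KK[of Ms PS "Suc j"] by (auto simp: csubspace_def)
  show "1 \<le> DID_N Ms HS" "KK Ms PS (DID_N Ms HS) = {0}"
    unfolding N using LeastI[of "\<lambda>i. 1 \<le> i \<and> KK Ms PS i = {0}", OF ex] by auto
  show "\<And>i. 1 \<le> i \<Longrightarrow> i < DID_N Ms HS \<Longrightarrow> KK Ms PS i \<noteq> {0}"
    unfolding N using not_less_Least by blast
qed



lemma Dset:
  assumes kf: "kraus_family Ms" and inv: "invariant Ms HS" and cs: "csubspace HS"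
    and pr: "is_orth_proj PS HS"
  shows "{s + (\<Sum>i\<in>{1..m}. t i) | s t. s \<in> HS \<and> (\<forall>i\<in>{1..m}. t i \<in> KK Ms PS (i-1) \<inter> orth_compl (KK Ms PS i))}
         = orth_compl (KK Ms PS m)"
proof (induction m)
  case 0
  have "{s + (\<Sum>i\<in>{1..0::nat}. t i) | s t. s \<in> HS \<and> (\<forall>i\<in>{1..0::nat}. t i \<in> KK Ms PS (i-1) \<inter> orth_compl (KK Ms PS i))} = HS"
    by auto
  then show ?case using KK_facts(2)[OF pr] orth_compl_orth_compl[OF cs] by simp
next
  case (Suc m)
  let ?T = "\<lambda>i. KK Ms PS (i-1) \<inter> orth_compl (KK Ms PS i)"
  let ?D = "\<lambda>m. {s + (\<Sum>i\<in>{1..m}. t i) | s t. s \<in> HS \<and> (\<forall>i\<in>{1..m}. t i \<in> ?T i)}"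
  have "?D (Suc m) = ?D m \<oplus>\<^sub>s ?T (Suc m)"
  proof
    show "?D (Suc m) \<subseteq> ?D m \<oplus>\<^sub>s ?T (Suc m)"
    proof
      fix x assume "x \<in> ?D (Suc m)"
      then obtain s t where s: "s \<in> HS" and t: "\<forall>i\<in>{1..Suc m}. t i \<in> ?T i"
        and x: "x = s + (\<Sum>i\<in>{1..Suc m}. t i)" by blast
      have "x = (s + (\<Sum>i\<in>{1..m}. t i)) + t (Suc m)" using x by (simp add: add.assoc)
      moreover have "s + (\<Sum>i\<in>{1..m}. t i) \<in> ?D m"
        using s t by (intro CollectI exI[of _ s] exI[of _ t]) auto
      moreover have "t (Suc m) \<in> ?T (Suc m)" using bspec[OF t, of "Suc m"] by simp
      ultimately show "x \<in> ?D m \<oplus>\<^sub>s ?T (Suc m)" unfolding ssum_def by blast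
    qed
    show "?D m \<oplus>\<^sub>s ?T (Suc m) \<subseteq> ?D (Suc m)"
    proof
      fix x assume "x \<in> ?D m \<oplus>\<^sub>s ?T (Suc m)"
      then obtain a b where a: "a \<in> ?D m" and b: "b \<in> ?T (Suc m)" and x: "x = a + b"
        unfolding ssum_def by blast
      then obtain s t where s: "s \<in> HS" and t: "\<forall>i\<in>{1..m}. t i \<in> ?T i"
        and ae: "a = s + (\<Sum>i\<in>{1..m}. t i)" by blast
      define t' where "t' = t(Suc m := b)"
      have "(\<Sum>i\<in>{1..m}. t' i) = (\<Sum>i\<in>{1..m}. t i)" by (rule sum.cong) (auto simp: t'_def)
      then have "x = s + (\<Sum>i\<in>{1..Suc m}. t' i)" using x ae by (simp add: t'_def add.assoc)
      moreover have "\<forall>i\<in>{1..Suc m}. t' i \<in> ?T i"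
      proof
        fix i assume i: "i \<in> {1..Suc m}"
        show "t' i \<in> ?T i"
        proof (cases "i = Suc m")
          case True then show ?thesis using b by (simp add: t'_def)
        next
          case False
          then have "i \<in> {1..m}" "t' i = t i" using i by (auto simp: t'_def)
          then show ?thesis using t by simp
        qed
      qed
      ultimately show "x \<in> ?D (Suc m)" using s by blast
    qed
  qed
  also have "\<dots> = orth_compl (KK Ms PS m) \<oplus>\<^sub>s (KK Ms PS m \<inter> orth_compl (KK Ms PS (Suc m)))"
    using Suc by simp
  also have "\<dots> = orth_compl (KK Ms PS (Suc m))"
    using decomp2[OF csubspace_KK csubspace_KK KK_mono[OF assms]] by simp
  finally show ?case .
qed

theorem proposition6:
  fixes Ms :: "('n::finite) cmat list" and HS :: "'n cvec set" and PS :: "'n cmat"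
  assumes "kraus_family Ms"
    and "csubspace HS"
    and "is_orth_proj PS HS"
    and "GAS Ms HS PS"
  shows "(\<forall>n. 1 \<le> n \<and> n \<le> DID_N Ms HS \<longrightarrow>
            supp (((kraus_dual Ms) ^^ n) PS) = DID_sum Ms HS n)
       \<and> (\<forall>n. n > DID_N Ms HS \<longrightarrow> supp (((kraus_dual Ms) ^^ n) PS) = UNIV)
       \<and> (\<forall>Ms'. kraus_family Ms' \<and> kraus_map Ms' = kraus_map Ms \<longrightarrow>
            DID_N Ms' HS = DID_N Ms HS \<and>
            (\<forall>i\<in>{1..DID_N Ms HS}. DID_T Ms' HS i = DID_T Ms HS i))"
proof -
  note kf = assms(1) and cs = assms(2) and pr = assms(3) and gas = assms(4)
  have inv: "invariant Ms HS" using gas by (simp add: GAS_def)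
  define N where "N = DID_N Ms HS"
  have N1: "1 \<le> N" and KN: "KK Ms PS N = {0}"
    and Kne: "\<And>i. 1 \<le> i \<Longrightarrow> i < N \<Longrightarrow> KK Ms PS i \<noteq> {0}"
    using N_props[OF kf gas cs pr] unfolding N_def by auto
  note R = DID_R_KK[OF kf inv cs pr]
  have suppK: "supp (((kraus_dual Ms) ^^ n) PS) = orth_compl (KK Ms PS n)" for n
    by (simp add: supp_def KK_def)
  have T: "DID_T Ms HS i = KK Ms PS (i-1) \<inter> orth_compl (KK Ms PS i)" if "1 \<le> i" "i < N" for i
    using that R[of i] R[of "Suc i"] by (simp add: DID_T_def N_def)
  have TN: "DID_T Ms HS N = KK Ms PS (N-1)"
    using R[of N] by (simp add: DID_T_def N_def)
  note Ds = Dset[OF kf inv cs pr]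
  have part1: "supp (((kraus_dual Ms) ^^ n) PS) = DID_sum Ms HS n" if n: "1 \<le> n" "n \<le> N" for n
  proof (cases "n < N")
    case True
    have "DID_sum Ms HS n = {s + (\<Sum>i\<in>{1..n}. t i) | s t. s \<in> HS \<and> (\<forall>i\<in>{1..n}. t i \<in> KK Ms PS (i-1) \<inter> orth_compl (KK Ms PS i))}"
    proof -
      have cong: "(\<forall>i\<in>{1..n}. t i \<in> DID_T Ms HS i) = (\<forall>i\<in>{1..n}. t i \<in> KK Ms PS (i-1) \<inter> orth_compl (KK Ms PS i))" for t
        using T True by auto
      show ?thesis unfolding DID_sum_def by (simp only: cong)
    qed
    then show ?thesis using Ds[of n] suppK[of n] by simp
  next
    case False
    then have nN: "n = N" using n by simp
    have "DID_sum Ms HS N = UNIV"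
    proof -
      have "x \<in> DID_sum Ms HS N" for x
      proof -
        obtain p q where p: "p \<in> KK Ms PS (N-1)" and q: "q \<in> orth_compl (KK Ms PS (N-1))"
          and x: "x = p + q" using decomp[OF csubspace_KK] by blast
        obtain s t where s: "s \<in> HS" and t: "\<forall>i\<in>{1..N-1}. t i \<in> KK Ms PS (i-1) \<inter> orth_compl (KK Ms PS i)"
          and qe: "q = s + (\<Sum>i\<in>{1..N-1}. t i)" using q Ds[of "N-1"] by blast
        define t' where "t' = t(N := p)"
        obtain k where k: "N = Suc k" using N1 by (cases N) auto
        have "(\<Sum>i\<in>{1..N-1}. t' i) = (\<Sum>i\<in>{1..N-1}. t i)" by (rule sum.cong) (auto simp: t'_def)
        moreover have "(\<Sum>i\<in>{1..N}. t' i) = (\<Sum>i\<in>{1..N-1}. t' i) + t' N"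
          unfolding k by simp
        moreover have tN: "t' N = p" by (simp add: t'_def)
        ultimately have "x = s + (\<Sum>i\<in>{1..N}. t' i)" using x qe by (simp add: algebra_simps)
        moreover have "\<forall>i\<in>{1..N}. t' i \<in> DID_T Ms HS i"
        proof
          fix i assume i: "i \<in> {1..N}"
          show "t' i \<in> DID_T Ms HS i"
          proof (cases "i = N")
            case True then show ?thesis using p TN by (simp add: t'_def)
          next
            case False
            then have i1: "i \<in> {1..N-1}" and ti: "t' i = t i" using i by (auto simp: t'_def)
            have "t i \<in> KK Ms PS (i-1) \<inter> orth_compl (KK Ms PS i)" using bspec[OF t i1] .
            moreover have "DID_T Ms HS i = KK Ms PS (i-1) \<inter> orth_compl (KK Ms PS i)"
              using T[of i] i1 N1 by auto
            ultimately show ?thesis using ti by simp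
          qed
        qed
        ultimately show ?thesis unfolding DID_sum_def
          by (intro CollectI exI[of _ s] exI[of _ t']) (use s in blast)
      qed
      then show ?thesis by blast
    qed
    then show ?thesis using nN suppK[of N] KN orth_compl_zero by simp
  qed
  have part2: "supp (((kraus_dual Ms) ^^ n) PS) = UNIV" if "n > N" for n
  proof -
    have "KK Ms PS n \<subseteq> {0}" using KK_antimono[OF kf inv cs pr, of N n] that KN by simp
    then have "KK Ms PS n = {0}" using csubspace_KK[of Ms PS n] by (auto simp: csubspace_def)
    then show ?thesis using suppK[of n] orth_compl_zero by simp
  qed
  have part3: "DID_N Ms' HS = DID_N Ms HS \<and> (\<forall>i\<in>{1..DID_N Ms HS}. DID_T Ms' HS i = DID_T Ms HS i)"
    if kf': "kraus_family Ms'" and eq: "kraus_map Ms' = kraus_map Ms" for Ms'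
  proof -
    have inv': "invariant Ms' HS" using inv eq by (simp add: invariant_def)
    have "DID_R Ms' HS i = DID_R Ms HS i" for i
      using DID_R_KK[OF kf' inv' cs pr, of i] R[of i] KK_indep[OF pr eq] by simp
    then have RR: "DID_R Ms' HS = DID_R Ms HS" by blast
    have NN: "DID_N Ms' HS = DID_N Ms HS" unfolding DID_N_def RR ..
    show ?thesis unfolding DID_T_def NN RR by simp
  qed
  show ?thesis using part1 part2 part3 unfolding N_def by blast
qed


end
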